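(* Let $\mathbf A$ be a Mal'cev algebra, $n\ge1$, and $\alpha_0,\dots,\alpha_{n-1}$ congruences of $\mathbf A$. Then $\psi_i(\Delta(\alpha_0,\dots,\alpha_{n-1}))=\psi_j(\Delta(\alpha_0,\dots,\alpha_{n-1}))$ for all $i,j<2^n$.
   Context: A Mal'cev algebra is an algebra with a ternary term operation $q$ satisfying $q(x,x,y)=y=q(y,x,x)$. Tuples in $A^m$ are indexed by $0,\dots,m-1$; $k_{(i)}$ is the $i$-th binary digit of $k$ (least significant is $i=0$). For $a,b\in A$ and $i<n$, $\mathbf c_i^n(a,b)\in A^{2^n}$ has $k$-th coordinate $a$ if $k_{(i)}=0$ and $b$ if $k_{(i)}=1$. $\Delta(\alpha_0,\dots,\alpha_{n-1})$ is the subuniverse of $\mathbf A^{2^n}$ generated by $\{\mathbf c_i^n(a,b): i<n,\ (a,b)\in\alpha_i\}$. Forks: for $R\subseteq A^m$ and $i<m$, $\psi_i(R)$ is the set of pairs $(a,b)$ for which there exist $\mathbf c,\mathbf d\in R$ with $c_i=a$, $d_i=b$, and $c_k=d_k$ for all $k\neq i$. *)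

theory Defs
  imports Main
begin

definition is_algebra :: "'a set \<Rightarrow> (nat \<times> ('a list \<Rightarrow> 'a)) set \<Rightarrow> bool" where
  "is_algebra A F \<longleftrightarrow> A \<noteq> {} \<and>
     (\<forall>(k, f) \<in> F. \<forall>xs. length xs = k \<and> set xs \<subseteq> A \<longrightarrow> f xs \<in> A)"

inductive term_op :: "'a set \<Rightarrow> (nat \<times> ('a list \<Rightarrow> 'a)) set \<Rightarrow> nat \<Rightarrow> ('a list \<Rightarrow> 'a) \<Rightarrow> bool"
  for A F m where
  proj: "i < m \<Longrightarrow> term_op A F m (\<lambda>xs. xs ! i)"
| comp: "(k, g) \<in> F \<Longrightarrow> length hs = k \<Longrightarrow> (\<forall>h \<in> set hs. term_op A F m h)
          \<Longrightarrow> term_op A F m (\<lambda>xs. g (map (\<lambda>h. h xs) hs))"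

definition malcev_algebra :: "'a set \<Rightarrow> (nat \<times> ('a list \<Rightarrow> 'a)) set \<Rightarrow> bool" where
  "malcev_algebra A F \<longleftrightarrow> is_algebra A F \<and>
     (\<exists>q. term_op A F 3 q \<and> (\<forall>x\<in>A. \<forall>y\<in>A. q [x, x, y] = y \<and> q [y, x, x] = y))"

definition congruence :: "'a set \<Rightarrow> (nat \<times> ('a list \<Rightarrow> 'a)) set \<Rightarrow> 'a rel \<Rightarrow> bool" where
  "congruence A F \<alpha> \<longleftrightarrow> equiv A \<alpha> \<and>
     (\<forall>(k, f) \<in> F. \<forall>xs ys. length xs = k \<and> length ys = k \<and>
        (\<forall>j<k. (xs ! j, ys ! j) \<in> \<alpha>) \<longrightarrow> (f xs, f ys) \<in> \<alpha>)"

text \<open>Tuples in A^m are lists of length m, indexed 0..m-1.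
  The subuniverse of A^m generated by G (basic operations act coordinatewise).\<close>
inductive_set gen_sub :: "(nat \<times> ('a list \<Rightarrow> 'a)) set \<Rightarrow> nat \<Rightarrow> 'a list set \<Rightarrow> 'a list set"
  for F m G where
  base: "x \<in> G \<Longrightarrow> x \<in> gen_sub F m G"
| op: "(k, f) \<in> F \<Longrightarrow> length xs = k \<Longrightarrow> (\<forall>x \<in> set xs. x \<in> gen_sub F m G)
        \<Longrightarrow> map (\<lambda>j. f (map (\<lambda>x. x ! j) xs)) [0..<m] \<in> gen_sub F m G"

definition bit_digit :: "nat \<Rightarrow> nat \<Rightarrow> nat" where
  "bit_digit k i = (k div 2 ^ i) mod 2"

definition cvec :: "nat \<Rightarrow> nat \<Rightarrow> 'a \<Rightarrow> 'a \<Rightarrow> 'a list" where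
  "cvec n i a b = map (\<lambda>k. if bit_digit k i = 0 then a else b) [0..<2 ^ n]"

definition Delta :: "(nat \<times> ('a list \<Rightarrow> 'a)) set \<Rightarrow> nat \<Rightarrow> (nat \<Rightarrow> 'a rel) \<Rightarrow> 'a list set" where
  "Delta F n \<alpha> = gen_sub F (2 ^ n) {cvec n i a b | i a b. i < n \<and> (a, b) \<in> \<alpha> i}"

definition fork :: "nat \<Rightarrow> nat \<Rightarrow> 'a list set \<Rightarrow> 'a rel" where
  "fork m i R = {(a, b). \<exists>c\<in>R. \<exists>d\<in>R. c ! i = a \<and> d ! i = b \<and>
                         (\<forall>k<m. k \<noteq> i \<longrightarrow> c ! k = d ! k)}"

end

theory Submission
  imports Defs
begin

lemma xor_lt: "(k::nat) < 2^n \<Longrightarrow> t < 2^n \<Longrightarrow> xor k t < 2^n"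
  by (metis take_bit_nat_eq_self_iff take_bit_xor)

lemma xor_xor: "xor (xor (k::nat) t) t = k"
  by (simp add: xor.assoc)

lemma bd_xor: "bit_digit (xor (k::nat) t) i = (if bit_digit k i = bit_digit t i then 0 else 1)"
  unfolding bit_digit_def
  by (metis bit_iff_odd bit_xor_iff mod2_eq_if)

lemma bd_cases: "bit_digit k i = 0 \<or> bit_digit k i = 1"
  unfolding bit_digit_def by auto

lemma bd_pos: "(0 < bit_digit k i) = (bit_digit k i = 1)"
  using bd_cases[of k i] by auto

definition TT :: "nat \<Rightarrow> nat \<Rightarrow> 'a list \<Rightarrow> 'a list" where
  "TT n t c = map (\<lambda>k. c ! (xor k t)) [0..<2^n]"

lemma TT_nth: "k < 2^n \<Longrightarrow> TT n t c ! k = c ! (xor k t)"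
  by (simp add: TT_def)

lemma TT_gen:
  assumes sym: "\<forall>k<n. sym (\<alpha> k)" and t: "t < 2^n"
    and x: "x \<in> gen_sub F (2^n) {cvec n i a b | i a b. i < n \<and> (a, b) \<in> \<alpha> i}"
  shows "TT n t x \<in> gen_sub F (2^n) {cvec n i a b | i a b. i < n \<and> (a, b) \<in> \<alpha> i}"
  using x
proof (induction rule: gen_sub.induct)
  case (base x)
  then obtain i a b where x: "x = cvec n i a b" "i < n" "(a,b) \<in> \<alpha> i" by blast
  show ?case
  proof (cases "bit_digit t i = 0")
    case True
    have "TT n t x = cvec n i a b"
      unfolding x TT_def cvec_def
      by (rule nth_equalityI) (auto simp: xor_lt t bd_xor True)
    then show ?thesis using x by (auto intro: gen_sub.base)
  next
    case False
    have bd: "bit_digit t i = 1" using False by (simp add: bit_digit_def)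
    have "TT n t x = cvec n i b a"
      unfolding x TT_def cvec_def
      by (rule nth_equalityI) (simp_all add: xor_lt t bd_xor bd bd_pos)
    moreover have "(b,a) \<in> \<alpha> i" using x sym by (meson symD)
    ultimately show ?thesis using x by (auto intro: gen_sub.base)
  qed
next
  case (op k f xs)
  have "TT n t (map (\<lambda>j. f (map (\<lambda>x. x ! j) xs)) [0..<2^n])
      = map (\<lambda>j. f (map (\<lambda>x. x ! j) (map (TT n t) xs))) [0..<2^n]"
    unfolding TT_def
    by (rule nth_equalityI) (auto simp: xor_lt t comp_def)
  moreover have "map (\<lambda>j. f (map (\<lambda>x. x ! j) (map (TT n t) xs))) [0..<2^n]
      \<in> gen_sub F (2^n) {cvec n i a b | i a b. i < n \<and> (a, b) \<in> \<alpha> i}"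
    by (rule gen_sub.op) (use op in auto)
  ultimately show ?case by simp
qed

lemma fork_sub:
  assumes sym: "\<forall>k<n. sym (\<alpha> k)" and i: "i < 2 ^ n" and j: "j < 2 ^ n"
  shows "fork (2 ^ n) i (Delta F n \<alpha>) \<subseteq> fork (2 ^ n) j (Delta F n \<alpha>)"
proof
  fix p assume "p \<in> fork (2 ^ n) i (Delta F n \<alpha>)"
  then obtain a b c d where p: "p = (a,b)" and c: "c \<in> Delta F n \<alpha>" and d: "d \<in> Delta F n \<alpha>"
    and ca: "c ! i = a" and db: "d ! i = b" and agree: "\<forall>k<2^n. k \<noteq> i \<longrightarrow> c ! k = d ! k"
    unfolding fork_def by blast
  define t where "t = xor i j"
  have t: "t < 2^n" unfolding t_def using i j by (rule xor_lt)
  have jt: "xor j t = i" unfolding t_def by (metis xor.commute xor_xor)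
  have c': "TT n t c \<in> Delta F n \<alpha>" "TT n t d \<in> Delta F n \<alpha>"
    using TT_gen[OF sym t] c d unfolding Delta_def by auto
  have "TT n t c ! j = a" "TT n t d ! j = b" using TT_nth[OF j] jt ca db by auto
  moreover have "\<forall>k<2^n. k \<noteq> j \<longrightarrow> TT n t c ! k = TT n t d ! k"
  proof (intro allI impI)
    fix k assume k: "k < 2^n" "k \<noteq> j"
    have "xor k t \<noteq> i" using k(2) jt by (metis xor_xor)
    moreover have "xor k t < 2^n" using k(1) t by (rule xor_lt)
    ultimately show "TT n t c ! k = TT n t d ! k" using TT_nth[OF k(1), of t c] TT_nth[OF k(1), of t d] agree by auto
  qed
  ultimately show "p \<in> fork (2 ^ n) j (Delta F n \<alpha>)"
    unfolding fork_def p using c' by blast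
qed

theorem mainTheorem6:
  fixes A :: "'a set" and F :: "(nat \<times> ('a list \<Rightarrow> 'a)) set"
    and n :: nat and \<alpha> :: "nat \<Rightarrow> 'a rel"
  assumes "malcev_algebra A F"
    and "n \<ge> 1"
    and "\<forall>k<n. congruence A F (\<alpha> k)"
    and "i < 2 ^ n" and "j < 2 ^ n"
  shows "fork (2 ^ n) i (Delta F n \<alpha>) = fork (2 ^ n) j (Delta F n \<alpha>)"
proof -
  have sym: "\<forall>k<n. sym (\<alpha> k)" using assms(3) unfolding congruence_def equiv_def by blast
  show ?thesis using fork_sub[OF sym assms(4,5)] fork_sub[OF sym assms(5,4)] by blast
qed

end
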